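(* Let $H$ be a finite group of odd order with $d(H)\le 1$. Then $\mathsf{GEN}(\mathbb{Z}_2^2\times H)=*1$.
   Context: For a finite group $G$, $\mathsf{GEN}(G)$ is the following impartial two-player game. A position is a set of elements selected so far; the starting position is $\emptyset$. From a position $P$ with $\langle P\rangle\neq G$, the player to move selects some $g\in G\setminus P$, producing the position $P\cup\{g\}$ (these are the options of $P$); a position $P$ with $\langle P\rangle = G$ has no options. The nim-number of a position is defined recursively by $\operatorname{nim}(P)=\operatorname{mex}\{\operatorname{nim}(Q): Q \text{ an option of } P\}$, where $\operatorname{mex}(A)$ is the least nonnegative integer not in $A$. We write $\mathsf{GEN}(G)=*n$ if $\operatorname{nim}(\emptyset)=n$. $d(G)$ denotes the minimum size of a generating set of $G$ (with $d(G)=0$ for trivial $G$); $\mathbb{Z}_2^2=\mathbb{Z}_2\times\mathbb{Z}_2$. *)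

theory Defs
  imports "HOL-Algebra.Algebra"
begin

definition mex :: "nat set \<Rightarrow> nat" where
  "mex A = (LEAST n. n \<notin> A)"

function gen_nim :: "('a, 'b) monoid_scheme \<Rightarrow> 'a set \<Rightarrow> nat" where
  "gen_nim G P =
     (if finite (carrier G) \<and> P \<subseteq> carrier G \<and> generate G P \<noteq> carrier G
      then mex ((\<lambda>g. gen_nim G (insert g P)) ` (carrier G - P))
      else 0)"
  by auto
termination
  by (relation "measure (\<lambda>(G, P). card (carrier G - P))")
     (simp, simp only: in_measure split_conv, rule psubset_card_mono, auto)

declare gen_nim.simps [simp del]

definition GEN_nim :: "('a, 'b) monoid_scheme \<Rightarrow> nat" where
  "GEN_nim G = gen_nim G {}"

definition min_gens :: "('a, 'b) monoid_scheme \<Rightarrow> nat" where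
  "min_gens G = (LEAST n. \<exists>S. S \<subseteq> carrier G \<and> finite S \<and> card S = n \<and> generate G S = carrier G)"

end

theory Submission
  imports Defs
begin

abbreviation Z2 where "Z2 \<equiv> integer_mod_group 2"

lemma carrier_Z2: "carrier Z2 = {0,1}"
  by (auto simp: carrier_integer_mod_group)

lemma pow_DirProd: "pow (A \<times>\<times> B) (a, b) (k::nat) = (pow A a k, pow B b k)"
  by (induction k) auto

lemma mex_0: "0 \<notin> A \<Longrightarrow> mex A = 0"
  unfolding mex_def by (rule Least_equality) auto

lemma mex_1: "0 \<in> A \<Longrightarrow> 1 \<notin> A \<Longrightarrow> mex A = 1"
  unfolding mex_def apply (rule Least_equality) apply auto
  by (metis Suc_le_eq gr0I)

lemma mex_2: "0 \<in> A \<Longrightarrow> 1 \<in> A \<Longrightarrow> 2 \<notin> A \<Longrightarrow> mex A = 2"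
  unfolding mex_def apply (rule Least_equality) apply auto
  by (metis One_nat_def less_2_cases not_le)

lemma sub_line:
  assumes "w \<in> carrier (Z2 \<times>\<times> Z2)"
  shows "subgroup {(0,0), w} (Z2 \<times>\<times> Z2)"
proof -
  interpret ZZ: group "Z2 \<times>\<times> Z2" by (simp add: DirProd_group)
  show ?thesis
  proof (rule ZZ.subgroupI)
    show "{(0, 0), w} \<subseteq> carrier (Z2 \<times>\<times> Z2)" using assms by (auto simp: carrier_Z2)
    show "{(0, 0), w} \<noteq> {}" by simp
    fix a assume "a \<in> {(0, 0), w}"
    then show "inv\<^bsub>Z2 \<times>\<times> Z2\<^esub> a \<in> {(0, 0), w}"
      using assms by (cases a; cases w) (auto simp: carrier_Z2)
  next
    fix a b assume "a \<in> {(0, 0), w}" "b \<in> {(0, 0), w}"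
    then show "a \<otimes>\<^bsub>Z2 \<times>\<times> Z2\<^esub> b \<in> {(0, 0), w}"
      using assms by (cases a; cases w; cases b) (auto simp: carrier_Z2)
  qed
qed

lemma gen_pow: "x \<in> generate G S \<Longrightarrow> pow G x (k::nat) \<in> generate G S"
  by (induction k) (auto intro: generate.eng generate.one)

lemma Z2_odd_pow: "v \<in> {0,1::int} \<Longrightarrow> odd k \<Longrightarrow> (int k * v) mod 2 = v"
proof -
  assume a: "v \<in> {0,1::int}" "odd k"
  have "int k mod 2 = 1" using a(2) by presburger
  then show ?thesis using a(1) by auto
qed

lemma Z2_even_pow: "v \<in> {0,1::int} \<Longrightarrow> even k \<Longrightarrow> (int k * v) mod 2 = 0"
  by auto

locale gz =
  fixes H :: "('a, 'b) monoid_scheme" and c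
  assumes grpH: "group H" and finH: "finite (carrier H)" and oddH: "odd (order H)"
    and c: "c \<in> carrier H" and genc: "generate H {c} = carrier H"
begin

abbreviation "G \<equiv> (Z2 \<times>\<times> Z2) \<times>\<times> H"

definition M :: "int \<times> int \<Rightarrow> ((int \<times> int) \<times> 'a) set" where
  "M w = {(0,0), w} \<times> carrier H"

lemma grpZZ: "group (Z2 \<times>\<times> Z2)" by (simp add: DirProd_group)

lemma grpG: "group G" by (simp add: DirProd_group grpZZ grpH)

lemma finG: "finite (carrier G)"
  using finH by (simp add: carrier_Z2)

lemma M_sub: "w \<in> carrier (Z2 \<times>\<times> Z2) \<Longrightarrow> subgroup (M w) G"
  unfolding M_def
  by (rule DirProd_subgroups[OF grpZZ sub_line grpH group.subgroup_self[OF grpH]])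

lemma M_proper:
  assumes "w \<in> carrier (Z2 \<times>\<times> Z2)" shows "M w \<noteq> carrier G"
proof -
  define w' where "w' = (if w = (1,0) then (0::int,1::int) else (1,0))"
  have "(w', \<one>\<^bsub>H\<^esub>) \<in> carrier G"
    using monoid.one_closed[OF group.is_monoid[OF grpH]] by (auto simp: w'_def carrier_Z2)
  moreover have "(w', \<one>\<^bsub>H\<^esub>) \<notin> M w" by (auto simp: M_def w'_def)
  ultimately show ?thesis by blast
qed

lemma gen_in_M:
  assumes "w \<in> carrier (Z2 \<times>\<times> Z2)" "Q \<subseteq> M w"
  shows "generate G Q \<noteq> carrier G"
proof
  assume "generate G Q = carrier G"
  moreover have "generate G Q \<subseteq> M w"
    by (rule group.generate_subgroup_incl[OF grpG assms(2) M_sub[OF assms(1)]])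
  moreover have "M w \<subseteq> carrier G" using subgroup.subset[OF M_sub[OF assms(1)]] .
  ultimately show False using M_proper[OF assms(1)] by blast
qed

lemma pow_n:
  assumes "v \<in> carrier (Z2 \<times>\<times> Z2)" "h \<in> carrier H"
  shows "pow G (v, h) (order H) = (v, \<one>\<^bsub>H\<^esub>)"
    and "pow G (v, h) (Suc (order H)) = ((0,0), h)"
proof -
  obtain v1 v2 where v: "v = (v1, v2)" "v1 \<in> {0,1}" "v2 \<in> {0,1}"
    using assms(1) by (cases v) (auto simp: carrier_Z2)
  have hn: "pow H h (order H) = \<one>\<^bsub>H\<^esub>"
    using group.pow_order_eq_1[OF grpH assms(2)] .
  show "pow G (v, h) (order H) = (v, \<one>\<^bsub>H\<^esub>)"
    using v hn oddH by (simp add: pow_DirProd Z2_odd_pow)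
  have "pow H h (Suc (order H)) = h"
    using hn assms(2) grpH by (simp add: monoid.nat_pow_Suc group.is_monoid)
  then show "pow G (v, h) (Suc (order H)) = ((0,0), h)"
    using v oddH by (simp add: pow_DirProd Z2_even_pow del: monoid.nat_pow_Suc nat_pow_Suc)
qed

lemma inv_G:
  assumes "v \<in> carrier (Z2 \<times>\<times> Z2)" "h \<in> carrier H"
  shows "inv\<^bsub>G\<^esub> (v, h) = (((- fst v) mod 2, (- snd v) mod 2), inv\<^bsub>H\<^esub> h)"
  using assms by (cases v) (auto simp add: inv_DirProd[OF grpZZ grpH]
     inv_DirProd[OF group_integer_mod_group group_integer_mod_group] carrier_Z2)

lemma gen2:
  assumes v: "v \<in> carrier (Z2 \<times>\<times> Z2)" "v \<noteq> (0,0)"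
    and w: "w \<in> carrier (Z2 \<times>\<times> Z2)" "w \<noteq> (0,0)" "w \<noteq> v"
    and h: "h \<in> carrier H"
  shows "generate G {(v,h),(w,c)} = carrier G"
proof -
  let ?K = "generate G {(v,h),(w,c)}"
  have Ssub: "{(v,h),(w,c)} \<subseteq> carrier G" using v w h c by auto
  have subK: "subgroup ?K G" by (rule group.generate_is_subgroup[OF grpG Ssub])
  have wcK: "(w,c) \<in> ?K" by (auto intro: generate.incl)
  have w1: "(w, \<one>\<^bsub>H\<^esub>) \<in> ?K"
    using gen_pow[OF wcK, of "order H"] pow_n(1)[OF w(1) c] by simp
  have c0: "((0,0), c) \<in> ?K"
    using gen_pow[OF wcK, of "Suc (order H)"] pow_n(2)[OF w(1) c] by simp
  define T where "T = {x \<in> carrier H. ((0,0), x) \<in> ?K}"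
  have subT: "subgroup T H"
  proof (rule group.subgroupI[OF grpH])
    show "T \<subseteq> carrier H" by (auto simp: T_def)
    have "\<one>\<^bsub>G\<^esub> \<in> ?K" by (rule generate.one)
    then show "T \<noteq> {}" using monoid.one_closed[OF group.is_monoid[OF grpH]]
      by (auto simp: T_def)
  next
    fix a assume a: "a \<in> T"
    then have "inv\<^bsub>G\<^esub> ((0,0), a) \<in> ?K" and ac: "a \<in> carrier H"
      using subgroup.m_inv_closed[OF subK] by (auto simp: T_def)
    then show "inv\<^bsub>H\<^esub> a \<in> T"
      using inv_G[of "(0,0)" a] by (auto simp: T_def carrier_Z2 grpH group.inv_closed)
  next
    fix a b assume ab: "a \<in> T" "b \<in> T"
    have "((0,0), a) \<otimes>\<^bsub>G\<^esub> ((0,0), b) \<in> ?K"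
      by (rule subgroup.m_closed[OF subK]) (use ab in \<open>auto simp: T_def\<close>)
    then have "((0,0), a \<otimes>\<^bsub>H\<^esub> b) \<in> ?K" by simp
    then show "a \<otimes>\<^bsub>H\<^esub> b \<in> T"
      using ab by (auto simp: T_def grpH group.is_monoid monoid.m_closed)
  qed
  have "c \<in> T" using c c0 by (auto simp: T_def)
  then have "generate H {c} \<subseteq> T"
    by (intro group.generate_subgroup_incl[OF grpH _ subT]) auto
  then have allH: "\<And>y. y \<in> carrier H \<Longrightarrow> ((0,0), y) \<in> ?K"
    using genc by (auto simp: T_def)
  have "((0,0), inv\<^bsub>H\<^esub> h) \<in> ?K" using allH h by (simp add: grpH group.inv_closed)
  moreover have "(v,h) \<in> ?K" by (auto intro: generate.incl)
  ultimately have "(v,h) \<otimes>\<^bsub>G\<^esub> ((0,0), inv\<^bsub>H\<^esub> h) \<in> ?K"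
    using subgroup.m_closed[OF subK] by blast
  then have v1: "(v, \<one>\<^bsub>H\<^esub>) \<in> ?K"
    using v h by (cases v) (auto simp: carrier_Z2 grpH group.r_inv)
  have vw1: "(v, \<one>\<^bsub>H\<^esub>) \<otimes>\<^bsub>G\<^esub> (w, \<one>\<^bsub>H\<^esub>) \<in> ?K"
    using subgroup.m_closed[OF subK v1 w1] .
  have one1: "((0,0), \<one>\<^bsub>H\<^esub>) \<in> ?K"
    using generate.one[of G "{(v,h),(w,c)}"] by simp
  have x1: "(x, \<one>\<^bsub>H\<^esub>) \<in> ?K" if x: "x \<in> carrier (Z2 \<times>\<times> Z2)" for x
  proof -
    have "x = (0,0) \<or> x = v \<or> x = w \<or> x = ((fst v + fst w) mod 2, (snd v + snd w) mod 2)"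
      using x v w by (cases x; cases v; cases w) (auto simp: carrier_Z2)
    moreover have "(v, \<one>\<^bsub>H\<^esub>) \<otimes>\<^bsub>G\<^esub> (w, \<one>\<^bsub>H\<^esub>)
        = (((fst v + fst w) mod 2, (snd v + snd w) mod 2), \<one>\<^bsub>H\<^esub>)"
      by (cases v; cases w) (simp add: grpH group.is_monoid monoid.one_closed)
    ultimately show ?thesis using one1 v1 w1 vw1 by auto
  qed
  have "carrier G \<subseteq> ?K"
  proof
    fix z assume z: "z \<in> carrier G"
    obtain x y where xy: "z = (x,y)" "x \<in> carrier (Z2 \<times>\<times> Z2)" "y \<in> carrier H"
      using z by (cases z) auto
    have "(x, \<one>\<^bsub>H\<^esub>) \<otimes>\<^bsub>G\<^esub> ((0,0), y) \<in> ?K"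
      using subgroup.m_closed[OF subK x1[OF xy(2)] allH[OF xy(3)]] .
    moreover have "(x, \<one>\<^bsub>H\<^esub>) \<otimes>\<^bsub>G\<^esub> ((0,0), y) = z"
      using xy by (cases x) (auto simp: carrier_Z2 grpH group.is_monoid monoid.l_one)
    ultimately show "z \<in> ?K" by simp
  qed
  then show ?thesis using subgroup.subset[OF subK] by blast
qed

lemma term_opt:
  assumes P: "P \<subseteq> carrier G" and p: "p \<in> P" "p \<notin> M (0,0)"
    and ng: "generate G P \<noteq> carrier G"
  shows "\<exists>g\<in>carrier G - P. generate G (insert g P) = carrier G"
proof -
  obtain v h where vh: "p = (v,h)" "v \<in> carrier (Z2 \<times>\<times> Z2)" "h \<in> carrier H"
    using P p by (cases p) auto
  have v0: "v \<noteq> (0,0)" using p(2) vh by (auto simp: M_def)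
  define w where "w = (if v = (1,0) then (0::int,1::int) else (1,0))"
  have w: "w \<in> carrier (Z2 \<times>\<times> Z2)" "w \<noteq> (0,0)" "w \<noteq> v" by (auto simp: w_def carrier_Z2)
  have gen: "generate G {(v,h),(w,c)} = carrier G" by (rule gen2[OF vh(2) v0 w vh(3)])
  have wcG: "(w,c) \<in> carrier G" using w c by simp
  have "(w,c) \<notin> P"
  proof
    assume "(w,c) \<in> P"
    then have "generate G {(v,h),(w,c)} \<subseteq> generate G P"
      using p vh by (intro group.mono_generate[OF grpG]) auto
    then show False using gen ng group.generate_incl[OF grpG P] by blast
  qed
  moreover have "generate G (insert (w,c) P) = carrier G"
  proof -
    have "generate G {(v,h),(w,c)} \<subseteq> generate G (insert (w,c) P)"
      using p vh by (intro group.mono_generate[OF grpG]) auto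
    moreover have "generate G (insert (w,c) P) \<subseteq> carrier G"
      using group.generate_incl[OF grpG] P wcG by auto
    ultimately show ?thesis using gen by blast
  qed
  ultimately show ?thesis using wcG by blast
qed

lemma odd_opt:
  assumes P: "P \<subseteq> carrier G" and p: "p \<in> P" "p \<notin> M (0,0)"
    and ng: "generate G P \<noteq> carrier G" and odd: "odd (card P)"
  shows "\<exists>g\<in>carrier G - P. generate G (insert g P) \<noteq> carrier G"
proof -
  let ?K = "generate G P"
  have subK: "subgroup ?K G" by (rule group.generate_is_subgroup[OF grpG P])
  have PK: "P \<subseteq> ?K" by (auto intro: generate.incl)
  have "\<not> ?K \<subseteq> P"
  proof
    assume "?K \<subseteq> P"
    then have KP: "?K = P" using PK by blast
    obtain v h where vh: "p = (v,h)" "v \<in> carrier (Z2 \<times>\<times> Z2)" "h \<in> carrier H"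
      using P p by (cases p) auto
    have v0: "v \<noteq> (0,0)" using p(2) vh by (auto simp: M_def)
    let ?x = "(v, \<one>\<^bsub>H\<^esub>)"
    have xK: "?x \<in> ?K"
      using gen_pow[of p G P "order H"] pow_n(1)[OF vh(2,3)] vh p by (auto intro: generate.incl)
    have oneH: "\<one>\<^bsub>H\<^esub> \<in> carrier H" by (simp add: grpH group.is_monoid monoid.one_closed)
    have xx: "?x \<otimes>\<^bsub>G\<^esub> ?x = \<one>\<^bsub>G\<^esub>"
      using vh(2) oneH by (cases v) (auto simp: carrier_Z2 grpH group.is_monoid monoid.l_one)
    have xinv: "inv\<^bsub>G\<^esub> ?x = ?x"
      using inv_G[OF vh(2) oneH] vh(2) by (cases v) (auto simp: carrier_Z2 grpH group.is_monoid monoid.inv_one)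
    have xG: "?x \<in> carrier G" using vh(2) oneH by simp
    have sub2: "subgroup {\<one>\<^bsub>G\<^esub>, ?x} G"
    proof (rule group.subgroupI[OF grpG])
      show "{\<one>\<^bsub>G\<^esub>, ?x} \<subseteq> carrier G" using xG oneH by simp
      show "{\<one>\<^bsub>G\<^esub>, ?x} \<noteq> {}" by simp
    next
      fix a assume "a \<in> {\<one>\<^bsub>G\<^esub>, ?x}"
      then show "inv\<^bsub>G\<^esub> a \<in> {\<one>\<^bsub>G\<^esub>, ?x}"
        using xinv monoid.inv_one[OF group.is_monoid[OF grpG]] by auto
    next
      fix a b assume "a \<in> {\<one>\<^bsub>G\<^esub>, ?x}" "b \<in> {\<one>\<^bsub>G\<^esub>, ?x}"
      then show "a \<otimes>\<^bsub>G\<^esub> b \<in> {\<one>\<^bsub>G\<^esub>, ?x}"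
      proof -
        have m: "monoid G" by (rule group.is_monoid[OF grpG])
        have "\<one>\<^bsub>G\<^esub> \<otimes>\<^bsub>G\<^esub> \<one>\<^bsub>G\<^esub> = \<one>\<^bsub>G\<^esub>"
          using monoid.l_one[OF m monoid.one_closed[OF m]] .
        moreover have "\<one>\<^bsub>G\<^esub> \<otimes>\<^bsub>G\<^esub> ?x = ?x" using monoid.l_one[OF m xG] .
        moreover have "?x \<otimes>\<^bsub>G\<^esub> \<one>\<^bsub>G\<^esub> = ?x" using monoid.r_one[OF m xG] .
        ultimately show ?thesis using xx \<open>a \<in> _\<close> \<open>b \<in> _\<close> by auto
      qed
    qed
    have "{\<one>\<^bsub>G\<^esub>, ?x} \<subseteq> ?K" using xK subgroup.one_closed[OF subK] by auto
    then have s2: "subgroup {\<one>\<^bsub>G\<^esub>, ?x} (G\<lparr>carrier := ?K\<rparr>)"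
      by (rule group.subgroup_incl[OF grpG sub2 subK])
    have gK: "group (G\<lparr>carrier := ?K\<rparr>)" by (rule group.subgroup_imp_group[OF grpG subK])
    have "card (rcosets\<^bsub>G\<lparr>carrier := ?K\<rparr>\<^esub> {\<one>\<^bsub>G\<^esub>, ?x}) * card {\<one>\<^bsub>G\<^esub>, ?x}
        = order (G\<lparr>carrier := ?K\<rparr>)"
      by (rule group.lagrange[OF gK s2])
    moreover have "card {\<one>\<^bsub>G\<^esub>, ?x} = 2" using v0 by simp
    moreover have "order (G\<lparr>carrier := ?K\<rparr>) = card P" using KP by (simp add: order_def)
    ultimately show False using odd by (metis dvd_triv_right)
  qed
  then obtain g where g: "g \<in> ?K" "g \<notin> P" by blast
  have gG: "g \<in> carrier G" using g group.generate_incl[OF grpG P] by blast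
  have "generate G (insert g P) \<subseteq> ?K"
    using g PK by (intro group.generate_subgroup_incl[OF grpG _ subK]) auto
  then have "generate G (insert g P) \<noteq> carrier G"
    using ng group.generate_incl[OF grpG P] by blast
  then show ?thesis using g gG by blast
qed

definition f :: "((int \<times> int) \<times> 'a) set \<Rightarrow> nat" where
  "f P = (if even (card P) then 1 else if P \<subseteq> M (0,0) then 0 else 2)"

lemma card_M0: "card (M (0,0)) = order H"
  by (simp add: M_def order_def card_cartesian_product)

lemma main:
  "P \<subseteq> carrier G \<Longrightarrow> generate G P \<noteq> carrier G \<Longrightarrow> gen_nim G P = f P"
proof (induction "card (carrier G - P)" arbitrary: P rule: less_induct)
  case (less P)
  have finP: "finite P" using less.prems(1) finG finite_subset by blast
  have unf: "gen_nim G P = mex ((\<lambda>g. gen_nim G (insert g P)) ` (carrier G - P))"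
    using less.prems finG by (subst gen_nim.simps) simp
  have opt0: "gen_nim G (insert g P) = 0"
    if g: "generate G (insert g P) = carrier G" for g
    using g by (subst gen_nim.simps) simp
  have optf: "gen_nim G (insert g P) = f (insert g P)"
    if g: "g \<in> carrier G - P" "generate G (insert g P) \<noteq> carrier G" for g
  proof -
    have "card (carrier G - insert g P) < card (carrier G - P)"
      using g finG by (intro psubset_card_mono) auto
    moreover have "insert g P \<subseteq> carrier G" using g less.prems by blast
    ultimately show ?thesis using less.hyps g(2) by blast
  qed
  have cins: "card (insert g P) = Suc (card P)" if "g \<notin> P" for g using finP that by simp
  let ?O = "(\<lambda>g. gen_nim G (insert g P)) ` (carrier G - P)"
  have M0G: "(0::int,0::int) \<in> carrier (Z2 \<times>\<times> Z2)" by (simp add: carrier_Z2)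
  have fod: "f (insert g P) = 1" if "g \<notin> P" "odd (card P)" for g
    using cins[OF that(1)] that(2) by (simp add: f_def)
  have fev: "f (insert g P) \<noteq> 1" if "g \<notin> P" "even (card P)" for g
    using cins[OF that(1)] that(2) by (simp add: f_def)
  have fev0: "f (insert g P) = 0" if "g \<notin> P" "even (card P)" "insert g P \<subseteq> M (0,0)" for g
    using cins[OF that(1)] that(2,3) by (simp add: f_def)
  have vals: "\<exists>g\<in>carrier G - P. x = 0 \<or> x = f (insert g P)" if x: "x \<in> ?O" for x
  proof -
    obtain g where g: "g \<in> carrier G - P" "x = gen_nim G (insert g P)" using x by blast
    show ?thesis
    proof (cases "generate G (insert g P) = carrier G")
      case True then show ?thesis using opt0 g by blast
    next
      case False then show ?thesis using optf g by blast
    qed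
  qed
  show ?case
  proof (cases "even (card P)")
    case ev: True
    have "1 \<notin> ?O"
    proof
      assume o1: "1 \<in> ?O"
      from vals[OF o1] obtain g where "g \<in> carrier G - P" "(1::nat) = 0 \<or> 1 = f (insert g P)"
        by blast
      then show False using fev[of g] ev by auto
    qed
    moreover have "0 \<in> ?O"
    proof (cases "P \<subseteq> M (0,0)")
      case True
      have "P \<noteq> M (0,0)"
      proof
        assume "P = M (0,0)"
        then have "card P = order H" using card_M0 by simp
        then show False using ev oddH by simp
      qed
      then have "P \<subset> M (0,0)" using True by (rule psubsetI[rotated])
      then obtain g where g: "g \<in> M (0,0)" "g \<notin> P" by (metis psubset_imp_ex_mem DiffE)
      have gG: "g \<in> carrier G" using g(1) subgroup.subset[OF M_sub[OF M0G]] by blast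
      have sub: "insert g P \<subseteq> M (0,0)" using True g by blast
      have ng: "generate G (insert g P) \<noteq> carrier G"
        using gen_in_M[OF M0G sub] .
      have "gen_nim G (insert g P) = 0"
        using optf[of g] gG g ng fev0[OF g(2) ev sub] by simp
      then show ?thesis using gG g by (intro rev_image_eqI[of g]) auto
    next
      case False
      then obtain p where "p \<in> P" "p \<notin> M (0,0)" by blast
      then obtain g where g: "g \<in> carrier G - P" "generate G (insert g P) = carrier G"
        using term_opt less.prems by blast
      then show ?thesis using opt0[OF g(2)] by (intro rev_image_eqI[of g]) auto
    qed
    ultimately have "mex ?O = 1" by (rule mex_1[rotated])
    then show ?thesis using unf ev by (simp add: f_def)
  next
    case od: False
    show ?thesis
    proof (cases "P \<subseteq> M (0,0)")
      case True
      have "0 \<notin> ?O"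
      proof
        assume "0 \<in> ?O"
        then obtain g where g0: "0 = gen_nim G (insert g P)" and g1: "g \<in> carrier G - P"
          by (rule imageE)
        have g: "g \<in> carrier G - P" "gen_nim G (insert g P) = 0" using g0 g1 by simp_all
        obtain w y where wy: "g = (w,y)" "w \<in> carrier (Z2 \<times>\<times> Z2)" using g(1) by (cases g) auto
        have "insert g P \<subseteq> M w" using True wy g(1) by (auto simp: M_def)
        then have "generate G (insert g P) \<noteq> carrier G" using gen_in_M[OF wy(2)] by blast
        then have "gen_nim G (insert g P) = 1" using optf[OF g(1)] fod[of g] g(1) od by simp
        then show False using g(2) by simp
      qed
      then have "mex ?O = 0" by (rule mex_0)
      then show ?thesis using unf od True by (simp add: f_def)
    next
      case False
      then obtain p where p: "p \<in> P" "p \<notin> M (0,0)" by blast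
      have "0 \<in> ?O"
      proof -
        obtain g where g: "g \<in> carrier G - P" "generate G (insert g P) = carrier G"
          using term_opt less.prems p by blast
        then show ?thesis using opt0[OF g(2)] by (intro rev_image_eqI[of g]) auto
      qed
      moreover have "1 \<in> ?O"
      proof -
        obtain g where g: "g \<in> carrier G - P" "generate G (insert g P) \<noteq> carrier G"
          using odd_opt less.prems p od by blast
        then have "gen_nim G (insert g P) = 1" using optf[OF g(1)] fod[of g] od by simp
        then show ?thesis using g by (intro rev_image_eqI[of g]) auto
      qed
      moreover have "2 \<notin> ?O"
      proof
        assume o2: "2 \<in> ?O"
        from vals[OF o2] obtain g where "g \<in> carrier G - P" "(2::nat) = 0 \<or> 2 = f (insert g P)"
          by blast
        then show False using fod[of g] od by auto
      qed
      ultimately have "mex ?O = 2" by (rule mex_2)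
      then show ?thesis using unf od False by (simp add: f_def)
    qed
  qed
qed

end


lemma exists_gen:
  assumes "group H" and "finite (carrier H)" and "min_gens H \<le> 1"
  obtains c where "c \<in> carrier H" "generate H {c} = carrier H"
proof -
  have ex: "\<exists>n. \<exists>S. S \<subseteq> carrier H \<and> finite S \<and> card S = n \<and> generate H S = carrier H"
  proof (intro exI[of _ "card (carrier H)"] exI[of _ "carrier H"] conjI)
    show "generate H (carrier H) = carrier H"
    proof (rule equalityI)
      show "generate H (carrier H) \<subseteq> carrier H" by (rule group.generate_incl[OF assms(1)]) simp
      show "carrier H \<subseteq> generate H (carrier H)" by (rule subsetI) (rule generate.incl)
    qed
  qed (use assms(2) in auto)
  obtain S where S: "S \<subseteq> carrier H" "finite S" "card S = min_gens H" "generate H S = carrier H"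
    using LeastI_ex[OF ex] unfolding min_gens_def[symmetric] by auto
  have "card S \<le> Suc 0" using S(3) assms(3) by simp
  then have "card S = 0 \<or> card S = 1" by auto
  then have "S = {} \<or> (\<exists>c. S = {c})"
  proof
    assume "card S = 0" then show ?thesis using S(2) by simp
  next
    assume "card S = 1"
    then obtain c where "S = {c}" by (rule card_1_singletonE)
    then show ?thesis by blast
  qed
  then show ?thesis
  proof
    assume "S = {}"
    then have "carrier H = {\<one>\<^bsub>H\<^esub>}" using S(4) group.generate_empty[OF assms(1)] by simp
    then show ?thesis using that[of "\<one>\<^bsub>H\<^esub>"] group.generate_one[OF assms(1)] by simp
  next
    assume "\<exists>c. S = {c}"
    then obtain c where "S = {c}" by blast
    then show ?thesis using that[of c] S(1,4) by simp
  qed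
qed

theorem proposition4p10:
  fixes H :: "('a, 'b) monoid_scheme"
  assumes "group H" and "finite (carrier H)" and "odd (order H)"
    and "min_gens H \<le> 1"
  shows "GEN_nim ((integer_mod_group 2 \<times>\<times> integer_mod_group 2) \<times>\<times> H) = 1"
proof -
  obtain c where c: "c \<in> carrier H" "generate H {c} = carrier H"
    using exists_gen[OF assms(1,2,4)] by blast
  have L: "gz H c" unfolding gz_def using assms c by blast
  let ?G = "(integer_mod_group 2 \<times>\<times> integer_mod_group 2) \<times>\<times> H"
  have oneH: "\<one>\<^bsub>H\<^esub> \<in> carrier H" by (simp add: assms(1) group.is_monoid monoid.one_closed)
  have e: "generate ?G {} = {\<one>\<^bsub>?G\<^esub>}" by (rule group.generate_empty[OF gz.grpG[OF L]])
  have m: "((1,0), \<one>\<^bsub>H\<^esub>) \<in> carrier ?G" using oneH by (simp add: carrier_Z2)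
  have ne: "generate ?G {} \<noteq> carrier ?G"
  proof
    assume "generate ?G {} = carrier ?G"
    then have "((1::int,0::int), \<one>\<^bsub>H\<^esub>) \<in> {\<one>\<^bsub>?G\<^esub>}" using e m by simp
    then show False by simp
  qed
  have "gen_nim ?G {} = gz.f H {}" by (rule gz.main[OF L _ ne]) simp
  then show ?thesis by (simp add: GEN_nim_def gz.f_def[OF L])
qed

end
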